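(* Let $a,b,c$ be integers with $a,b,c>1$ and let $$M=\begin{pmatrix} a & b\\ c & 1\end{pmatrix}.$$ Then $\mathrm{Cat}(M)\neq\emptyset$ if and only if $a-bc>0$.
   Context: For an $n\times n$ matrix $M=(m_{ij})$ with entries in the natural numbers, $\mathrm{Cat}(M)$ denotes the collection of categories $A$ with exactly $n$ distinct objects $x_1,\dots,x_n$ such that $|A(x_i,x_j)|=m_{ij}$ for all $i,j$, where $A(x_i,x_j)$ is the set of morphisms from $x_i$ to $x_j$. One says $M$ "works" if $\mathrm{Cat}(M)\neq\emptyset$. *)

theory Defs
  imports Main
begin

(* A category with objects x_0,...,x_{n-1} (indices 0..<n) whose hom-set A(x_i,x_j)
   has exactly m i j elements is, up to relabelling morphisms, given by taking
   A(x_i,x_j) = {0..<m i j} together with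
     comp i j k g f   (= g o f  for f : x_i -> x_j, g : x_j -> x_k)
     idn i            (identity of x_i). *)

type_synonym cat_data = "(nat \<Rightarrow> nat \<Rightarrow> nat \<Rightarrow> nat \<Rightarrow> nat \<Rightarrow> nat) \<times> (nat \<Rightarrow> nat)"

definition Cat :: "nat \<Rightarrow> (nat \<Rightarrow> nat \<Rightarrow> nat) \<Rightarrow> cat_data set" where
  "Cat n m = {(comp, idn).
     (\<forall>i<n. idn i < m i i) \<and>
     (\<forall>i<n. \<forall>j<n. \<forall>k<n. \<forall>f<m i j. \<forall>g<m j k. comp i j k g f < m i k) \<and>
     (\<forall>i<n. \<forall>j<n. \<forall>f<m i j. comp i j j (idn j) f = f \<and> comp i i j f (idn i) = f) \<and>
     (\<forall>i<n. \<forall>j<n. \<forall>k<n. \<forall>l<n. \<forall>f<m i j. \<forall>g<m j k. \<forall>h<m k l.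
        comp i k l h (comp i j k g f) = comp i j l (comp j k l h g) f)}"

definition works :: "nat \<Rightarrow> (nat \<Rightarrow> nat \<Rightarrow> nat) \<Rightarrow> bool" where
  "works n m \<longleftrightarrow> Cat n m \<noteq> {}"

definition mat2 :: "nat \<Rightarrow> nat \<Rightarrow> nat \<Rightarrow> nat \<Rightarrow> (nat \<Rightarrow> nat \<Rightarrow> nat)" where
  "mat2 a b c d = (\<lambda>i j. if i = 0 then (if j = 0 then a else b) else (if j = 0 then c else d))"

end

theory Submission
  imports Defs
begin

lemma CatD:
  assumes "(cm, idn) \<in> Cat n m"
  shows "(\<forall>i<n. idn i < m i i) \<and>
   (\<forall>i<n. \<forall>j<n. \<forall>k<n. \<forall>f<m i j. \<forall>g<m j k. cm i j k g f < m i k) \<and>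
   (\<forall>i<n. \<forall>j<n. \<forall>f<m i j. cm i j j (idn j) f = f \<and> cm i i j f (idn i) = f) \<and>
   (\<forall>i<n. \<forall>j<n. \<forall>k<n. \<forall>l<n. \<forall>f<m i j. \<forall>g<m j k. \<forall>h<m k l.
        cm i k l h (cm i j k g f) = cm i j l (cm j k l h g) f)"
  using assms unfolding Cat_def mem_Collect_eq case_prod_conv .
lemma CatI:
  assumes "\<forall>i<n. idn i < m i i"
   "\<forall>i<n. \<forall>j<n. \<forall>k<n. \<forall>f<m i j. \<forall>g<m j k. cm i j k g f < m i k"
   "\<forall>i<n. \<forall>j<n. \<forall>f<m i j. cm i j j (idn j) f = f \<and> cm i i j f (idn i) = f"
   "\<forall>i<n. \<forall>j<n. \<forall>k<n. \<forall>l<n. \<forall>f<m i j. \<forall>g<m j k. \<forall>h<m k l.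
        cm i k l h (cm i j k g f) = cm i j l (cm j k l h g) f"
  shows "(cm, idn) \<in> Cat n m"
  unfolding Cat_def mem_Collect_eq case_prod_conv using assms by (intro conjI)

lemma nec:
  fixes a b c :: nat
  assumes b: "b > 1" and C: "(cm, idn) \<in> Cat 2 (mat2 a b c 1)"
  shows "b * c < a"
proof -
  let ?m = "mat2 a b c 1"
  have m: "?m 0 0 = a" "?m 0 1 = b" "?m 1 0 = c" "?m 1 1 = 1" by (auto simp: mat2_def)
  note D = CatD[OF C]
  note idn = D[THEN conjunct1]
  note cl = D[THEN conjunct2, THEN conjunct1]
  note un = D[THEN conjunct2, THEN conjunct2, THEN conjunct1]
  note as = D[THEN conjunct2, THEN conjunct2, THEN conjunct2]
  have "idn 1 < 1" using idn[rule_format, of 1] m by simp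
  then have i1: "idn 1 = 0" by simp
  have i0: "idn 0 < a" using idn[rule_format, of 0] m by simp
  have yy: "cm 1 0 1 f g = 0" if "f < b" "g < c" for f g
    using cl[rule_format, of 1 0 1 g f] that m by simp
  have recf: "cm 0 0 1 f' (cm 0 1 0 g f) = f" if "f < b" "g < c" "f' < b" for f g f'
  proof -
    have "cm 0 0 1 f' (cm 0 1 0 g f) = cm 0 1 1 (cm 1 0 1 f' g) f"
      using as[rule_format, of 0 1 0 1 f g f'] that m by simp
    also have "\<dots> = cm 0 1 1 (idn 1) f" using yy that i1 by simp
    also have "\<dots> = f" using un[rule_format, of 0 1 f] that m by simp
    finally show ?thesis .
  qed
  have recg: "cm 1 0 0 (cm 0 1 0 g f) g' = g" if "f < b" "g < c" "g' < c" for f g g'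
  proof -
    have "cm 1 0 0 (cm 0 1 0 g f) g' = cm 1 1 0 g (cm 1 0 1 f g')"
      using as[rule_format, of 1 0 1 0 g' f g] that m by simp
    also have "\<dots> = cm 1 1 0 g (idn 1)" using yy that i1 by simp
    also have "\<dots> = g" using un[rule_format, of 1 0 g] that m by simp
    finally show ?thesis .
  qed
  show ?thesis
  proof (cases "c = 0")
    case True then show ?thesis using i0 by simp
  next
    case False
    let ?phi = "\<lambda>(f,g). cm 0 1 0 g f"
    have inj: "inj_on ?phi ({..<b} \<times> {..<c})"
    proof (rule inj_onI)
      fix x y assume hx: "x \<in> {..<b} \<times> {..<c}" "y \<in> {..<b} \<times> {..<c}" "?phi x = ?phi y"
      obtain f g where x: "x = (f, g)" by (cases x)
      obtain f2 g2 where y: "y = (f2, g2)" by (cases y)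
      have h: "f < b" "g < c" "f2 < b" "g2 < c" "cm 0 1 0 g f = cm 0 1 0 g2 f2"
        using hx unfolding x y by auto
      have "f = f2" using recf[of f g 0] recf[of f2 g2 0] h b by simp
      moreover have "g = g2" using recg[of f g 0] recg[of f2 g2 0] h False by simp
      ultimately show "x = y" using x y by simp
    qed
    have sub: "?phi ` ({..<b} \<times> {..<c}) \<subseteq> {..<a} - {idn 0}"
    proof (rule subsetI)
      fix z assume "z \<in> ?phi ` ({..<b} \<times> {..<c})"
      then obtain f g where h: "f < b" "g < c" and z: "z = cm 0 1 0 g f" by auto
      have za: "cm 0 1 0 g f < a" using cl[rule_format, of 0 1 0 f g] h m by simp
      have "cm 0 1 0 g f \<noteq> idn 0"
      proof (rule notI)
      assume e: "cm 0 1 0 g f = idn 0"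
      have "f' = f" if "f' < b" for f'
      proof -
        have "f' = cm 0 0 1 f' (idn 0)" using un[rule_format, of 0 1 f'] that m by simp
        also have "\<dots> = f" using e recf[OF h that] by simp
        finally show ?thesis .
      qed
      then have "0 = f" "1 = f" using b by auto
      then show False by simp
      qed
      then show "z \<in> {..<a} - {idn 0}" using za z by simp
    qed
    have "card (?phi ` ({..<b} \<times> {..<c})) = b * c" using card_image[OF inj] by simp
    moreover have "card (?phi ` ({..<b} \<times> {..<c})) \<le> card ({..<a} - {idn 0})"
      by (rule card_mono[OF _ sub]) simp
    ultimately show ?thesis using i0 by simp
  qed
qed

definition P :: "nat \<Rightarrow> nat \<Rightarrow> nat \<Rightarrow> nat" where "P b r l = 1 + r + b * l"
lemma P_nz[simp]: "P b r l \<noteq> 0" by (simp add: P_def)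

definition R :: "nat \<Rightarrow> nat \<Rightarrow> nat \<Rightarrow> nat" where
  "R b c h = (if 1 \<le> h \<and> h \<le> b * c then (h - 1) mod b else 0)"
definition L :: "nat \<Rightarrow> nat \<Rightarrow> nat \<Rightarrow> nat" where
  "L b c h = (if 1 \<le> h \<and> h \<le> b * c then (h - 1) div b else 0)"

definition cmp :: "nat \<Rightarrow> nat \<Rightarrow> nat \<Rightarrow> nat \<Rightarrow> nat \<Rightarrow> nat \<Rightarrow> nat \<Rightarrow> nat" where
  "cmp b c i j k g f =
    (if i = 0 \<and> j = 0 \<and> k = 0 then (if f = 0 then g else if g = 0 then f else P b (R b c f) (L b c g))
     else if i = 0 \<and> j = 0 then (if f = 0 then g else R b c f)
     else if i = 0 \<and> k = 0 then P b f g
     else if i = 0 then f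
     else if j = 0 \<and> k = 0 then (if g = 0 then f else L b c g)
     else if j = 0 then 0
     else if k = 0 then g else 0)"

lemma RL:
  fixes b c r l :: nat
  assumes "b > 0" "r < b" "l < c"
  shows "R b c (P b r l) = r" "L b c (P b r l) = l" "P b r l \<noteq> 0" "P b r l \<le> b * c"
proof -
  have le: "r + b * l < b * c"
  proof -
    have "r + b * l < b + b * l" using assms by simp
    also have "\<dots> = b * (l + 1)" by simp
    also have "\<dots> \<le> b * c" using assms by (intro mult_le_mono2) simp
    finally show ?thesis .
  qed
  thus "P b r l \<le> b * c" by (simp add: P_def)
  show "R b c (P b r l) = r" using le assms by (simp add: R_def P_def)
  show "L b c (P b r l) = l" using le assms by (simp add: L_def P_def)
  show "P b r l \<noteq> 0" by (simp add: P_def)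
qed

lemma RLb:
  fixes b c h :: nat
  assumes "b > 0" "c > 0"
  shows "R b c h < b" "L b c h < c"
proof -
  show "R b c h < b" using assms by (simp add: R_def)
  show "L b c h < c"
  proof (cases "1 \<le> h \<and> h \<le> b * c")
    case True
    then have "h - 1 < b * c" by linarith
    then have "h - 1 < c * b" by (simp add: mult.commute)
    then have "(h - 1) div b < c" by (rule less_mult_imp_div_less)
    then show ?thesis using True by (simp add: L_def)
  qed (use assms in \<open>auto simp: L_def\<close>)
qed

lemma cmp_simps:
  "cmp b c 0 0 0 g f = (if f = 0 then g else if g = 0 then f else P b (R b c f) (L b c g))"
  "cmp b c 0 0 (Suc 0) g f = (if f = 0 then g else R b c f)"
  "cmp b c 0 (Suc 0) 0 g f = P b f g"
  "cmp b c 0 (Suc 0) (Suc 0) g f = f"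
  "cmp b c (Suc 0) 0 0 g f = (if g = 0 then f else L b c g)"
  "cmp b c (Suc 0) 0 (Suc 0) g f = 0"
  "cmp b c (Suc 0) (Suc 0) 0 g f = g"
  "cmp b c (Suc 0) (Suc 0) (Suc 0) g f = 0"
  by (simp_all add: cmp_def)

lemma suf:
  fixes a b c :: nat
  assumes "b > 1" "c > 1" "b * c < a"
  shows "(cmp b c, \<lambda>_. 0) \<in> Cat 2 (mat2 a b c 1)"
proof -
  have b0: "b > 0" and c0: "c > 0" using assms by auto
  note rl = RL[where b=b and c=c, OF b0] RLb[OF b0 c0]
  have Pa: "P b r l < a" if "r < b" "l < c" for r l using rl(4)[OF that] assms(3) by simp
  have two: "\<And>i. i < (2::nat) \<Longrightarrow> i = 0 \<or> i = 1" by auto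
  have m: "mat2 a b c 1 0 0 = a" "mat2 a b c 1 0 1 = b" "mat2 a b c 1 1 0 = c" "mat2 a b c 1 1 1 = 1"
    by (auto simp: mat2_def)
  have A: "\<forall>i<2. \<forall>j<2. \<forall>k<2. \<forall>f<mat2 a b c 1 i j. \<forall>g<mat2 a b c 1 j k. cmp b c i j k g f < mat2 a b c 1 i k"
  proof (intro allI impI)
    fix i j k f g assume h: "i < 2" "j < 2" "k < 2" "f < mat2 a b c 1 i j" "g < mat2 a b c 1 j k"
    from two[OF h(1)] two[OF h(2)] two[OF h(3)] h(4,5)
    show "cmp b c i j k g f < mat2 a b c 1 i k"
      by (elim disjE; simp add: mat2_def cmp_simps Pa rl(5,6) assms)
  qed
  have B: "\<forall>i<2. \<forall>j<2. \<forall>f<mat2 a b c 1 i j. cmp b c i j j 0 f = f \<and> cmp b c i i j f 0 = f"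
  proof (intro allI impI)
    fix i j f assume h: "i < 2" "j < 2" "f < mat2 a b c 1 i j"
    from two[OF h(1)] two[OF h(2)] h(3)
    show "cmp b c i j j 0 f = f \<and> cmp b c i i j f 0 = f"
      by (elim disjE; simp add: mat2_def cmp_simps)
  qed
  have C: "\<forall>i<2. \<forall>j<2. \<forall>k<2. \<forall>l<2. \<forall>f<mat2 a b c 1 i j. \<forall>g<mat2 a b c 1 j k. \<forall>h<mat2 a b c 1 k l.
        cmp b c i k l h (cmp b c i j k g f) = cmp b c i j l (cmp b c j k l h g) f"
  proof (intro allI impI)
    fix i j k l f g h assume H: "i < 2" "j < 2" "k < 2" "l < 2" "f < mat2 a b c 1 i j" "g < mat2 a b c 1 j k" "h < mat2 a b c 1 k l"
    from two[OF H(1)] two[OF H(2)] two[OF H(3)] two[OF H(4)] H(5-7)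
    show "cmp b c i k l h (cmp b c i j k g f) = cmp b c i j l (cmp b c j k l h g) f"
      by (elim disjE; simp add: mat2_def cmp_simps rl)
  qed
  have I: "\<forall>i<2. (0::nat) < mat2 a b c 1 i i"
  proof (intro allI impI)
    fix i :: nat assume "i < 2"
    then show "0 < mat2 a b c 1 i i" using assms by (auto simp: mat2_def)
  qed
  show ?thesis by (rule CatI[where cm="cmp b c" and idn="\<lambda>_. 0", OF I A B C])
qed

lemma ieq: "(0 < int a - int b * int c) = (b * c < a)"
proof -
  have "int b * int c = int (b * c)" by simp
  then show ?thesis by linarith
qed

theorem mainTheorem1:
  fixes a b c :: nat
  assumes "a > 1" and "b > 1" and "c > 1"
  shows "Cat 2 (mat2 a b c 1) \<noteq> {} \<longleftrightarrow> int a - int b * int c > 0"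
proof
  assume "Cat 2 (mat2 a b c 1) \<noteq> {}"
  then obtain cm idn where "(cm, idn) \<in> Cat 2 (mat2 a b c 1)" by auto
  from nec[OF assms(2) this] show "int a - int b * int c > 0" using ieq by simp
next
  assume "int a - int b * int c > 0"
  then have "b * c < a" using ieq by simp
  from suf[OF assms(2,3) this] show "Cat 2 (mat2 a b c 1) \<noteq> {}" by auto
qed

end
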